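(* Let $\Gamma^J=SL_2(\mathbb Z)\ltimes\mathbb Z^2$ be the full Jacobi group (pairs $(M,X)$, $M\in SL_2(\mathbb Z)$, $X\in\mathbb Z^2$ a row vector, with $(M,X)(M',X')=(MM',XM'+X')$), and consider the split extension $0\to\mathbb Z^2\xrightarrow{i}\Gamma^J\xrightarrow{\rho}SL_2(\mathbb Z)\to0$ with $i(X)=(I,X)$, $\rho(M,X)=M$. Then, with trivial integer coefficients, the induced sequence $$0\to H^2(SL_2(\mathbb Z))\xrightarrow{\rho^*}H^2(\Gamma^J)\xrightarrow{i^*}H^2(\mathbb Z^2)\to0$$ is exact and splits. *)

theory Defs
  imports "HOL-Analysis.Analysis" "HOL-Algebra.Algebra"
begin

definition cochain2_grp :: "('a,'b) monoid_scheme \<Rightarrow> (('a \<times> 'a) \<Rightarrow> int) monoid" where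
  "cochain2_grp G = \<lparr>carrier = extensional (carrier G \<times> carrier G),
     mult = (\<lambda>f g. restrict (\<lambda>p. f p + g p) (carrier G \<times> carrier G)),
     one = restrict (\<lambda>p. 0) (carrier G \<times> carrier G)\<rparr>"

definition cocycle2 :: "('a,'b) monoid_scheme \<Rightarrow> (('a \<times> 'a) \<Rightarrow> int) \<Rightarrow> bool" where
  "cocycle2 G f \<longleftrightarrow> f \<in> extensional (carrier G \<times> carrier G) \<and>
     (\<forall>g\<in>carrier G. \<forall>h\<in>carrier G. \<forall>k\<in>carrier G.
        f (h, k) - f (g \<otimes>\<^bsub>G\<^esub> h, k) + f (g, h \<otimes>\<^bsub>G\<^esub> k) - f (g, h) = 0)"

definition coboundary2 :: "('a,'b) monoid_scheme \<Rightarrow> (('a \<times> 'a) \<Rightarrow> int) \<Rightarrow> bool" where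
  "coboundary2 G f \<longleftrightarrow> f \<in> extensional (carrier G \<times> carrier G) \<and>
     (\<exists>\<phi> :: 'a \<Rightarrow> int. \<forall>g\<in>carrier G. \<forall>h\<in>carrier G.
        f (g, h) = \<phi> h - \<phi> (g \<otimes>\<^bsub>G\<^esub> h) + \<phi> g)"

definition Z2grp :: "('a,'b) monoid_scheme \<Rightarrow> (('a \<times> 'a) \<Rightarrow> int) monoid" where
  "Z2grp G = (cochain2_grp G) \<lparr>carrier := {f. cocycle2 G f}\<rparr>"

definition H2 :: "('a,'b) monoid_scheme \<Rightarrow> (('a \<times> 'a) \<Rightarrow> int) set monoid" where
  "H2 G = Z2grp G Mod {f. coboundary2 G f}"

definition pull2 :: "('a,'b) monoid_scheme \<Rightarrow> ('a \<Rightarrow> 'c) \<Rightarrow> (('c \<times> 'c) \<Rightarrow> int) \<Rightarrow> (('a \<times> 'a) \<Rightarrow> int)" where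
  "pull2 G \<alpha> f = restrict (\<lambda>(x, y). f (\<alpha> x, \<alpha> y)) (carrier G \<times> carrier G)"

definition H2_map :: "('a,'b) monoid_scheme \<Rightarrow> ('a \<Rightarrow> 'c) \<Rightarrow> (('c \<times> 'c) \<Rightarrow> int) set \<Rightarrow> (('a \<times> 'a) \<Rightarrow> int) set" where
  "H2_map G \<alpha> C = (\<Union>f\<in>C. {u. coboundary2 G u} #>\<^bsub>Z2grp G\<^esub> pull2 G \<alpha> f)"

definition SL2Z :: "(int^2^2) monoid" where
  "SL2Z = \<lparr>carrier = {M. det M = 1}, mult = (\<lambda>M N. M ** N), one = mat 1\<rparr>"

definition Jacobi :: "((int^2^2) \<times> (int^2)) monoid" where
  "Jacobi = \<lparr>carrier = {P. det (fst P) = 1},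
     mult = (\<lambda>P Q. (fst P ** fst Q, (snd P v* fst Q) + snd Q)),
     one = (mat 1, 0)\<rparr>"

definition Zsq :: "(int^2) monoid" where
  "Zsq = \<lparr>carrier = UNIV, mult = (+), one = 0\<rparr>"

definition iJ :: "int^2 \<Rightarrow> (int^2^2) \<times> (int^2)" where
  "iJ v = (mat 1, v)"

definition rhoJ :: "(int^2^2) \<times> (int^2) \<Rightarrow> int^2^2" where
  "rhoJ P = fst P"

end

theory Submission
  imports Defs
begin


definition cobd :: "('a,'b) monoid_scheme \<Rightarrow> (('a \<times> 'a) \<Rightarrow> int) \<Rightarrow> bool" where
 "cobd G f \<longleftrightarrow> (\<exists>\<phi>. \<forall>g\<in>carrier G. \<forall>h\<in>carrier G. f (g,h) = \<phi> h - \<phi> (g \<otimes>\<^bsub>G\<^esub> h) + \<phi> g)"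

definition cocyc :: "('a,'b) monoid_scheme \<Rightarrow> (('a \<times> 'a) \<Rightarrow> int) \<Rightarrow> bool" where
 "cocyc G f \<longleftrightarrow> (\<forall>g\<in>carrier G. \<forall>h\<in>carrier G. \<forall>k\<in>carrier G.
        f (h, k) - f (g \<otimes>\<^bsub>G\<^esub> h, k) + f (g, h \<otimes>\<^bsub>G\<^esub> k) - f (g, h) = 0)"

lemma cocycle2_iff: "cocycle2 G f \<longleftrightarrow> f \<in> extensional (carrier G \<times> carrier G) \<and> cocyc G f"
  unfolding cocycle2_def cocyc_def by simp

lemma coboundary2_iff: "coboundary2 G f \<longleftrightarrow> f \<in> extensional (carrier G \<times> carrier G) \<and> cobd G f"
  unfolding coboundary2_def cobd_def by simp

abbreviation Cob :: "('a,'b) monoid_scheme \<Rightarrow> (('a \<times> 'a) \<Rightarrow> int) set" where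
  "Cob G \<equiv> {f. coboundary2 G f}"

lemma Z2_carrier[simp]: "carrier (Z2grp G) = {f. cocycle2 G f}"
  by (simp add: Z2grp_def cochain2_grp_def)
lemma Z2_mult[simp]: "f \<otimes>\<^bsub>Z2grp G\<^esub> g = restrict (\<lambda>p. f p + g p) (carrier G \<times> carrier G)"
  by (simp add: Z2grp_def cochain2_grp_def)
lemma Z2_one[simp]: "\<one>\<^bsub>Z2grp G\<^esub> = restrict (\<lambda>p. 0) (carrier G \<times> carrier G)"
  by (simp add: Z2grp_def cochain2_grp_def)

lemma cobd_cocyc:
  assumes "monoid G" "cobd G f" shows "cocyc G f"
proof -
  obtain \<phi> where p: "\<forall>g\<in>carrier G. \<forall>h\<in>carrier G. f (g,h) = \<phi> h - \<phi> (g \<otimes>\<^bsub>G\<^esub> h) + \<phi> g"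
    using assms(2) unfolding cobd_def by blast
  show ?thesis unfolding cocyc_def
  proof (intro ballI)
    fix g h k assume a: "g \<in> carrier G" "h \<in> carrier G" "k \<in> carrier G"
    have c1: "g \<otimes>\<^bsub>G\<^esub> h \<in> carrier G" by (rule monoid.m_closed[OF assms(1) a(1) a(2)])
    have c2: "h \<otimes>\<^bsub>G\<^esub> k \<in> carrier G" by (rule monoid.m_closed[OF assms(1) a(2) a(3)])
    have as: "g \<otimes>\<^bsub>G\<^esub> h \<otimes>\<^bsub>G\<^esub> k = g \<otimes>\<^bsub>G\<^esub> (h \<otimes>\<^bsub>G\<^esub> k)"
      by (rule monoid.m_assoc[OF assms(1) a])
    note e1 = p[rule_format, OF a(2) a(3)]
    note e2 = p[rule_format, OF c1 a(3)]
    note e3 = p[rule_format, OF a(1) c2]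
    note e4 = p[rule_format, OF a(1) a(2)]
    show "f (h, k) - f (g \<otimes>\<^bsub>G\<^esub> h, k) + f (g, h \<otimes>\<^bsub>G\<^esub> k) - f (g, h) = 0"
      unfolding e1 e2 e3 e4 as by linarith
  qed
qed

lemma cobd_cong:
  assumes "cobd G f" "\<And>x y. x \<in> carrier G \<Longrightarrow> y \<in> carrier G \<Longrightarrow> g (x,y) = f (x,y)"
  shows "cobd G g"
proof -
  obtain \<phi> where p: "\<forall>x\<in>carrier G. \<forall>y\<in>carrier G. f (x,y) = \<phi> y - \<phi> (x \<otimes>\<^bsub>G\<^esub> y) + \<phi> x"
    using assms(1) unfolding cobd_def by blast
  show ?thesis unfolding cobd_def
    by (rule exI[of _ \<phi>]) (simp add: p assms(2))
qed

lemma cobd_add: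
  assumes "cobd G f" "cobd G g" shows "cobd G (\<lambda>p. f p + g p)"
proof -
  obtain \<phi> where p: "\<forall>x\<in>carrier G. \<forall>y\<in>carrier G. f (x,y) = \<phi> y - \<phi> (x \<otimes>\<^bsub>G\<^esub> y) + \<phi> x"
    using assms(1) unfolding cobd_def by blast
  obtain \<psi> where q: "\<forall>x\<in>carrier G. \<forall>y\<in>carrier G. g (x,y) = \<psi> y - \<psi> (x \<otimes>\<^bsub>G\<^esub> y) + \<psi> x"
    using assms(2) unfolding cobd_def by blast
  show ?thesis unfolding cobd_def
    by (rule exI[of _ "\<lambda>x. \<phi> x + \<psi> x"]) (simp add: p q)
qed

lemma cobd_neg:
  assumes "cobd G f" shows "cobd G (\<lambda>p. - f p)"
proof -
  obtain \<phi> where p: "\<forall>x\<in>carrier G. \<forall>y\<in>carrier G. f (x,y) = \<phi> y - \<phi> (x \<otimes>\<^bsub>G\<^esub> y) + \<phi> x"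
    using assms(1) unfolding cobd_def by blast
  show ?thesis unfolding cobd_def
    by (rule exI[of _ "\<lambda>x. - \<phi> x"]) (simp add: p)
qed

lemma cobd_diff:
  assumes "cobd G f" "cobd G g" shows "cobd G (\<lambda>p. f p - g p)"
  using cobd_add[OF assms(1) cobd_neg[OF assms(2)]] by simp

lemma cobd_delta: "cobd G (\<lambda>(x,y). \<phi> y - \<phi> (x \<otimes>\<^bsub>G\<^esub> y) + \<phi> x)"
  unfolding cobd_def by (rule exI[of _ \<phi>]) simp

lemma cobd_zero: "cobd G (\<lambda>p. 0)"
  unfolding cobd_def by (rule exI[of _ "\<lambda>x. 0"]) simp

lemma cocyc_add: "cocyc G f \<Longrightarrow> cocyc G g \<Longrightarrow> cocyc G (\<lambda>p. f p + g p)"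
  unfolding cocyc_def by (simp add: algebra_simps)
lemma cocyc_neg: "cocyc G f \<Longrightarrow> cocyc G (\<lambda>p. - f p)"
  unfolding cocyc_def by (simp add: algebra_simps)
lemma cocyc_scal: "cocyc G f \<Longrightarrow> cocyc G (\<lambda>p. k * f p)"
proof -
  assume a: "cocyc G f"
  show ?thesis unfolding cocyc_def
  proof (intro ballI)
    fix g h k' assume "g \<in> carrier G" "h \<in> carrier G" "k' \<in> carrier G"
    then have "f (h, k') - f (g \<otimes>\<^bsub>G\<^esub> h, k') + f (g, h \<otimes>\<^bsub>G\<^esub> k') - f (g, h) = 0"
      using a unfolding cocyc_def by blast
    then have "k * (f (h, k') - f (g \<otimes>\<^bsub>G\<^esub> h, k') + f (g, h \<otimes>\<^bsub>G\<^esub> k') - f (g, h)) = 0" by simp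
    then show "k * f (h, k') - k * f (g \<otimes>\<^bsub>G\<^esub> h, k') + k * f (g, h \<otimes>\<^bsub>G\<^esub> k') - k * f (g, h) = 0"
      by (simp add: algebra_simps)
  qed
qed

lemma cocyc_cong:
  assumes "monoid G" "cocyc G f" "\<And>x y. x \<in> carrier G \<Longrightarrow> y \<in> carrier G \<Longrightarrow> g (x,y) = f (x,y)"
  shows "cocyc G g"
  unfolding cocyc_def
proof (intro ballI)
  fix a b c assume abc: "a \<in> carrier G" "b \<in> carrier G" "c \<in> carrier G"
  have c1: "a \<otimes>\<^bsub>G\<^esub> b \<in> carrier G" "b \<otimes>\<^bsub>G\<^esub> c \<in> carrier G"
    using monoid.m_closed[OF assms(1) abc(1) abc(2)] monoid.m_closed[OF assms(1) abc(2) abc(3)] .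
  have "f (b, c) - f (a \<otimes>\<^bsub>G\<^esub> b, c) + f (a, b \<otimes>\<^bsub>G\<^esub> c) - f (a, b) = 0"
    using assms(2) abc unfolding cocyc_def by blast
  then show "g (b, c) - g (a \<otimes>\<^bsub>G\<^esub> b, c) + g (a, b \<otimes>\<^bsub>G\<^esub> c) - g (a, b) = 0"
    using assms(3) abc c1 by simp
qed

lemma cocycle2_restrict:
  assumes "monoid G" "cocyc G f"
  shows "cocycle2 G (restrict f (carrier G \<times> carrier G))"
  unfolding cocycle2_iff
  using cocyc_cong[OF assms, of "restrict f (carrier G \<times> carrier G)"] by simp

lemma coboundary2_restrict:
  assumes "cobd G f"
  shows "coboundary2 G (restrict f (carrier G \<times> carrier G))"
  unfolding coboundary2_iff
  using cobd_cong[OF assms, of "restrict f (carrier G \<times> carrier G)"] by simp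

lemma comm_group_Z2:
  assumes "monoid G" shows "comm_group (Z2grp G)"
proof (rule comm_groupI)
  fix x y assume "x \<in> carrier (Z2grp G)" "y \<in> carrier (Z2grp G)"
  then show "x \<otimes>\<^bsub>Z2grp G\<^esub> y \<in> carrier (Z2grp G)"
    using cocycle2_restrict[OF assms cocyc_add] by (simp add: cocycle2_iff)
next
  show "\<one>\<^bsub>Z2grp G\<^esub> \<in> carrier (Z2grp G)"
    using cocycle2_restrict[OF assms, of "\<lambda>p. 0"] by (simp add: cocyc_def)
next
  fix x y z assume "x \<in> carrier (Z2grp G)" "y \<in> carrier (Z2grp G)" "z \<in> carrier (Z2grp G)"
  then show "x \<otimes>\<^bsub>Z2grp G\<^esub> y \<otimes>\<^bsub>Z2grp G\<^esub> z = x \<otimes>\<^bsub>Z2grp G\<^esub> (y \<otimes>\<^bsub>Z2grp G\<^esub> z)"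
    by (auto simp: fun_eq_iff)
next
  fix x y assume "x \<in> carrier (Z2grp G)" "y \<in> carrier (Z2grp G)"
  then show "x \<otimes>\<^bsub>Z2grp G\<^esub> y = y \<otimes>\<^bsub>Z2grp G\<^esub> x"
    by (auto simp: fun_eq_iff)
next
  fix x assume x: "x \<in> carrier (Z2grp G)"
  then have e: "x \<in> extensional (carrier G \<times> carrier G)" by (simp add: cocycle2_iff)
  show "\<one>\<^bsub>Z2grp G\<^esub> \<otimes>\<^bsub>Z2grp G\<^esub> x = x"
  proof (rule ext)
    fix p show "(\<one>\<^bsub>Z2grp G\<^esub> \<otimes>\<^bsub>Z2grp G\<^esub> x) p = x p"
    proof (cases "p \<in> carrier G \<times> carrier G")
      case True then show ?thesis by simp
    next
      case False then show ?thesis using extensional_arb[OF e False] by simp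
    qed
  qed
next
  fix x assume x: "x \<in> carrier (Z2grp G)"
  then have c: "cocyc G x" by (simp add: cocycle2_iff)
  show "\<exists>y\<in>carrier (Z2grp G). y \<otimes>\<^bsub>Z2grp G\<^esub> x = \<one>\<^bsub>Z2grp G\<^esub>"
    by (rule bexI[of _ "restrict (\<lambda>p. - x p) (carrier G \<times> carrier G)"])
       (use cocycle2_restrict[OF assms cocyc_neg[OF c]] in auto)
qed

lemma subgroup_Cob:
  assumes "monoid G" shows "subgroup (Cob G) (Z2grp G)"
proof -
  interpret Z: comm_group "Z2grp G" by (rule comm_group_Z2[OF assms])
  show ?thesis
  proof (rule Z.subgroupI)
    show "Cob G \<subseteq> carrier (Z2grp G)"
      using cobd_cocyc[OF assms] by (auto simp: coboundary2_iff cocycle2_iff)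
    show "Cob G \<noteq> {}"
      using coboundary2_restrict[OF cobd_zero] by blast
  next
    fix a assume a: "a \<in> Cob G"
    have ac: "a \<in> carrier (Z2grp G)"
      using a cobd_cocyc[OF assms] by (auto simp: coboundary2_iff cocycle2_iff)
    let ?b = "restrict (\<lambda>p. - a p) (carrier G \<times> carrier G)"
    have bc: "?b \<in> carrier (Z2grp G)"
      using a cobd_cocyc[OF assms] cocycle2_restrict[OF assms cocyc_neg]
      by (auto simp: coboundary2_iff)
    have "?b \<otimes>\<^bsub>Z2grp G\<^esub> a = \<one>\<^bsub>Z2grp G\<^esub>" by auto
    then have "inv\<^bsub>Z2grp G\<^esub> a = ?b" using Z.inv_equality ac bc by blast
    then show "inv\<^bsub>Z2grp G\<^esub> a \<in> Cob G"
      using a coboundary2_restrict[OF cobd_neg] by (auto simp: coboundary2_iff)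
  next
    fix a b assume "a \<in> Cob G" "b \<in> Cob G"
    then show "a \<otimes>\<^bsub>Z2grp G\<^esub> b \<in> Cob G"
      using coboundary2_restrict[OF cobd_add] by (auto simp: coboundary2_iff)
  qed
qed

lemma normal_Cob: "monoid G \<Longrightarrow> Cob G \<lhd> Z2grp G"
  using comm_group.subgroup_imp_normal[OF comm_group_Z2 subgroup_Cob] by blast

lemma group_H2: "monoid G \<Longrightarrow> group (H2 G)"
  unfolding H2_def using normal.factorgroup_is_group[OF normal_Cob] by blast

lemma carrier_H2: "carrier (H2 G) = (\<lambda>f. Cob G #>\<^bsub>Z2grp G\<^esub> f) ` {f. cocycle2 G f}"
  unfolding H2_def carrier_FactGroup by simp

lemma one_H2: "\<one>\<^bsub>H2 G\<^esub> = Cob G"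
  unfolding H2_def by simp

lemma mult_H2: "monoid G \<Longrightarrow> cocycle2 G a \<Longrightarrow> cocycle2 G b \<Longrightarrow>
   (Cob G #>\<^bsub>Z2grp G\<^esub> a) \<otimes>\<^bsub>H2 G\<^esub> (Cob G #>\<^bsub>Z2grp G\<^esub> b)
    = Cob G #>\<^bsub>Z2grp G\<^esub> restrict (\<lambda>p. a p + b p) (carrier G \<times> carrier G)"
  unfolding H2_def mult_FactGroup
  using normal.rcos_sum[OF normal_Cob, of G a b] by simp

lemma mem_rcos_iff:
  assumes "monoid G" "cocycle2 G a" "cocycle2 G b"
  shows "a \<in> Cob G #>\<^bsub>Z2grp G\<^esub> b \<longleftrightarrow> cobd G (\<lambda>p. a p - b p)"
proof
  assume "a \<in> Cob G #>\<^bsub>Z2grp G\<^esub> b"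
  then obtain h where h: "coboundary2 G h" "a = h \<otimes>\<^bsub>Z2grp G\<^esub> b"
    unfolding r_coset_def by auto
  show "cobd G (\<lambda>p. a p - b p)"
    by (rule cobd_cong[of G h]) (use h in \<open>auto simp: coboundary2_iff\<close>)
next
  assume c: "cobd G (\<lambda>p. a p - b p)"
  let ?h = "restrict (\<lambda>p. a p - b p) (carrier G \<times> carrier G)"
  have "coboundary2 G ?h" by (rule coboundary2_restrict[OF c])
  moreover have "?h \<otimes>\<^bsub>Z2grp G\<^esub> b = a"
  proof (rule ext)
    have e: "a \<in> extensional (carrier G \<times> carrier G)" using assms(2) by (simp add: cocycle2_iff)
    fix p show "(?h \<otimes>\<^bsub>Z2grp G\<^esub> b) p = a p"
    proof (cases "p \<in> carrier G \<times> carrier G")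
      case True then show ?thesis by simp
    next
      case False then show ?thesis using extensional_arb[OF e False] by simp
    qed
  qed
  ultimately show "a \<in> Cob G #>\<^bsub>Z2grp G\<^esub> b"
    unfolding r_coset_def by force
qed

lemma rcos_eq_iff:
  assumes "monoid G" "cocycle2 G a" "cocycle2 G b"
  shows "Cob G #>\<^bsub>Z2grp G\<^esub> a = Cob G #>\<^bsub>Z2grp G\<^esub> b \<longleftrightarrow> cobd G (\<lambda>p. a p - b p)"
proof -
  have g: "group (Z2grp G)" using comm_group_Z2[OF assms(1)] comm_group.axioms(2) by blast
  note s = subgroup_Cob[OF assms(1)]
  show ?thesis
  proof
    assume "Cob G #>\<^bsub>Z2grp G\<^esub> a = Cob G #>\<^bsub>Z2grp G\<^esub> b"
    then have "a \<in> Cob G #>\<^bsub>Z2grp G\<^esub> b"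
      using group.repr_independenceD[OF g s, of a b] assms by simp
    then show "cobd G (\<lambda>p. a p - b p)" using mem_rcos_iff[OF assms] by simp
  next
    assume "cobd G (\<lambda>p. a p - b p)"
    then have "a \<in> Cob G #>\<^bsub>Z2grp G\<^esub> b" using mem_rcos_iff[OF assms] by simp
    then show "Cob G #>\<^bsub>Z2grp G\<^esub> a = Cob G #>\<^bsub>Z2grp G\<^esub> b"
      using group.repr_independence[OF g _ _ s, of a b] assms by simp
  qed
qed



definition homlike :: "('a,'b) monoid_scheme \<Rightarrow> ('c,'d) monoid_scheme \<Rightarrow> ('a \<Rightarrow> 'c) \<Rightarrow> bool" where
 "homlike G H \<alpha> \<longleftrightarrow> (\<forall>x\<in>carrier G. \<alpha> x \<in> carrier H) \<and>
    (\<forall>x\<in>carrier G. \<forall>y\<in>carrier G. \<alpha> (x \<otimes>\<^bsub>G\<^esub> y) = \<alpha> x \<otimes>\<^bsub>H\<^esub> \<alpha> y)"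

lemma pull_val[simp]: "x \<in> carrier G \<Longrightarrow> y \<in> carrier G \<Longrightarrow> pull2 G \<alpha> f (x,y) = f (\<alpha> x, \<alpha> y)"
  by (simp add: pull2_def)

lemma pull_ext: "pull2 G \<alpha> f \<in> extensional (carrier G \<times> carrier G)"
  by (simp add: pull2_def)

lemma pull_cocyc:
  assumes G: "monoid G" and h: "homlike G H \<alpha>" and c: "cocyc H f"
  shows "cocyc G (pull2 G \<alpha> f)"
  unfolding cocyc_def
proof (intro ballI)
  fix a b k assume abk: "a \<in> carrier G" "b \<in> carrier G" "k \<in> carrier G"
  have c1: "a \<otimes>\<^bsub>G\<^esub> b \<in> carrier G" by (rule monoid.m_closed[OF G abk(1) abk(2)])
  have c2: "b \<otimes>\<^bsub>G\<^esub> k \<in> carrier G" by (rule monoid.m_closed[OF G abk(2) abk(3)])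
  have hc: "\<alpha> a \<in> carrier H" "\<alpha> b \<in> carrier H" "\<alpha> k \<in> carrier H"
    using h abk unfolding homlike_def by auto
  have hm: "\<alpha> (a \<otimes>\<^bsub>G\<^esub> b) = \<alpha> a \<otimes>\<^bsub>H\<^esub> \<alpha> b" "\<alpha> (b \<otimes>\<^bsub>G\<^esub> k) = \<alpha> b \<otimes>\<^bsub>H\<^esub> \<alpha> k"
    using h abk unfolding homlike_def by auto
  have "f (\<alpha> b, \<alpha> k) - f (\<alpha> a \<otimes>\<^bsub>H\<^esub> \<alpha> b, \<alpha> k) + f (\<alpha> a, \<alpha> b \<otimes>\<^bsub>H\<^esub> \<alpha> k) - f (\<alpha> a, \<alpha> b) = 0"
    using c hc unfolding cocyc_def by blast
  then show "pull2 G \<alpha> f (b, k) - pull2 G \<alpha> f (a \<otimes>\<^bsub>G\<^esub> b, k) + pull2 G \<alpha> f (a, b \<otimes>\<^bsub>G\<^esub> k) - pull2 G \<alpha> f (a, b) = 0"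
    using abk c1 c2 hm by simp
qed

lemma pull_cocycle2:
  "monoid G \<Longrightarrow> homlike G H \<alpha> \<Longrightarrow> cocycle2 H f \<Longrightarrow> cocycle2 G (pull2 G \<alpha> f)"
  unfolding cocycle2_iff using pull_cocyc[of G H \<alpha> f] pull_ext[of G \<alpha> f] by blast

lemma pull_cobd:
  assumes h: "homlike G H \<alpha>" and c: "cobd H f"
  shows "cobd G (pull2 G \<alpha> f)"
proof -
  obtain \<phi> where p: "\<forall>x\<in>carrier H. \<forall>y\<in>carrier H. f (x,y) = \<phi> y - \<phi> (x \<otimes>\<^bsub>H\<^esub> y) + \<phi> x"
    using c unfolding cobd_def by blast
  show ?thesis unfolding cobd_def
  proof (rule exI[of _ "\<lambda>x. \<phi> (\<alpha> x)"], intro ballI)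
    fix x y assume xy: "x \<in> carrier G" "y \<in> carrier G"
    have hc: "\<alpha> x \<in> carrier H" "\<alpha> y \<in> carrier H"
      using h xy unfolding homlike_def by auto
    have hm: "\<alpha> (x \<otimes>\<^bsub>G\<^esub> y) = \<alpha> x \<otimes>\<^bsub>H\<^esub> \<alpha> y"
      using h xy unfolding homlike_def by auto
    show "pull2 G \<alpha> f (x, y) = \<phi> (\<alpha> y) - \<phi> (\<alpha> (x \<otimes>\<^bsub>G\<^esub> y)) + \<phi> (\<alpha> x)"
      using p[rule_format, OF hc] xy hm by simp
  qed
qed

lemma pull_cob:
  "homlike G H \<alpha> \<Longrightarrow> coboundary2 H f \<Longrightarrow> coboundary2 G (pull2 G \<alpha> f)"
  unfolding coboundary2_iff using pull_cobd[of G H \<alpha> f] pull_ext[of G \<alpha> f] by blast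

lemma pull_add:
  assumes h: "homlike G H \<alpha>"
  shows "pull2 G \<alpha> (restrict (\<lambda>p. a p + b p) (carrier H \<times> carrier H))
       = restrict (\<lambda>p. pull2 G \<alpha> a p + pull2 G \<alpha> b p) (carrier G \<times> carrier G)"
proof (rule ext)
  fix p show "pull2 G \<alpha> (restrict (\<lambda>p. a p + b p) (carrier H \<times> carrier H)) p =
     restrict (\<lambda>p. pull2 G \<alpha> a p + pull2 G \<alpha> b p) (carrier G \<times> carrier G) p"
  proof (cases "p \<in> carrier G \<times> carrier G")
    case True
    then obtain x y where p: "p = (x,y)" "x \<in> carrier G" "y \<in> carrier G" by auto
    have hc: "\<alpha> x \<in> carrier H" "\<alpha> y \<in> carrier H"
      using h p unfolding homlike_def by auto
    show ?thesis using p hc by simp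
  next
    case False then show ?thesis by (simp add: pull2_def)
  qed
qed

lemma pull_diff_cobd:
  assumes h: "homlike G H \<alpha>" and c: "cobd H (\<lambda>p. a p - b p)"
  shows "cobd G (\<lambda>p. pull2 G \<alpha> a p - pull2 G \<alpha> b p)"
proof -
  have "cobd G (pull2 G \<alpha> (\<lambda>p. a p - b p))" by (rule pull_cobd[OF h c])
  then show ?thesis
    by (rule cobd_cong) simp
qed

lemma rcos_elem_cocycle:
  assumes "monoid G" "cocycle2 G f" "f' \<in> Cob G #>\<^bsub>Z2grp G\<^esub> f"
  shows "cocycle2 G f'"
proof -
  interpret Z: comm_group "Z2grp G" by (rule comm_group_Z2[OF assms(1)])
  have "Cob G \<subseteq> carrier (Z2grp G)"
    using subgroup.subset[OF subgroup_Cob[OF assms(1)]] .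
  then have "Cob G #>\<^bsub>Z2grp G\<^esub> f \<subseteq> carrier (Z2grp G)"
    using Z.r_coset_subset_G assms(2) by simp
  then show ?thesis using assms(3) by auto
qed

lemma rcos_self_Z2:
  assumes "monoid G" "cocycle2 G f"
  shows "f \<in> Cob G #>\<^bsub>Z2grp G\<^esub> f"
  using mem_rcos_iff[OF assms assms(2)] cobd_zero by simp

lemma H2_map_coset:
  assumes G: "monoid G" and H: "monoid H" and h: "homlike G H \<alpha>" and f: "cocycle2 H f"
  shows "H2_map G \<alpha> (Cob H #>\<^bsub>Z2grp H\<^esub> f) = Cob G #>\<^bsub>Z2grp G\<^esub> pull2 G \<alpha> f"
proof -
  have pf: "cocycle2 G (pull2 G \<alpha> f)" by (rule pull_cocycle2[OF G h f])
  have eq: "Cob G #>\<^bsub>Z2grp G\<^esub> pull2 G \<alpha> f' = Cob G #>\<^bsub>Z2grp G\<^esub> pull2 G \<alpha> f"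
    if f': "f' \<in> Cob H #>\<^bsub>Z2grp H\<^esub> f" for f'
  proof -
    have c': "cocycle2 H f'" by (rule rcos_elem_cocycle[OF H f f'])
    have "cobd H (\<lambda>p. f' p - f p)" using mem_rcos_iff[OF H c' f] f' by simp
    then have "cobd G (\<lambda>p. pull2 G \<alpha> f' p - pull2 G \<alpha> f p)" by (rule pull_diff_cobd[OF h])
    then show ?thesis
      using rcos_eq_iff[OF G pull_cocycle2[OF G h c'] pf] by simp
  qed
  have ne: "f \<in> Cob H #>\<^bsub>Z2grp H\<^esub> f" by (rule rcos_self_Z2[OF H f])
  show ?thesis unfolding H2_map_def
  proof
    show "(\<Union>f'\<in>Cob H #>\<^bsub>Z2grp H\<^esub> f. Cob G #>\<^bsub>Z2grp G\<^esub> pull2 G \<alpha> f') \<subseteq> Cob G #>\<^bsub>Z2grp G\<^esub> pull2 G \<alpha> f"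
      using eq by blast
    show "Cob G #>\<^bsub>Z2grp G\<^esub> pull2 G \<alpha> f \<subseteq> (\<Union>f'\<in>Cob H #>\<^bsub>Z2grp H\<^esub> f. Cob G #>\<^bsub>Z2grp G\<^esub> pull2 G \<alpha> f')"
      using ne by blast
  qed
qed

lemma H2_map_hom:
  assumes G: "monoid G" and H: "monoid H" and h: "homlike G H \<alpha>"
  shows "H2_map G \<alpha> \<in> hom (H2 H) (H2 G)"
proof (rule homI)
  fix C assume "C \<in> carrier (H2 H)"
  then obtain f where f: "cocycle2 H f" "C = Cob H #>\<^bsub>Z2grp H\<^esub> f"
    unfolding carrier_H2 by auto
  show "H2_map G \<alpha> C \<in> carrier (H2 G)"
    unfolding f(2) H2_map_coset[OF G H h f(1)] carrier_H2
    using pull_cocycle2[OF G h f(1)] by blast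
next
  fix C D assume "C \<in> carrier (H2 H)" "D \<in> carrier (H2 H)"
  then obtain f g where f: "cocycle2 H f" "C = Cob H #>\<^bsub>Z2grp H\<^esub> f"
     and g: "cocycle2 H g" "D = Cob H #>\<^bsub>Z2grp H\<^esub> g"
    unfolding carrier_H2 by auto
  have fg: "cocycle2 H (restrict (\<lambda>p. f p + g p) (carrier H \<times> carrier H))"
    using cocycle2_restrict[OF H cocyc_add] f g by (simp add: cocycle2_iff)
  show "H2_map G \<alpha> (C \<otimes>\<^bsub>H2 H\<^esub> D) = H2_map G \<alpha> C \<otimes>\<^bsub>H2 G\<^esub> H2_map G \<alpha> D"
    unfolding f(2) g(2) mult_H2[OF H f(1) g(1)] H2_map_coset[OF G H h f(1)]
       H2_map_coset[OF G H h g(1)] H2_map_coset[OF G H h fg]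
       mult_H2[OF G pull_cocycle2[OF G h f(1)] pull_cocycle2[OF G h g(1)]]
       pull_add[OF h] ..
qed



lemma SL_carrier[simp]: "carrier SL2Z = {M. det M = 1}" by (simp add: SL2Z_def)
lemma SL_mult[simp]: "M \<otimes>\<^bsub>SL2Z\<^esub> N = M ** N" by (simp add: SL2Z_def)
lemma SL_one[simp]: "\<one>\<^bsub>SL2Z\<^esub> = mat 1" by (simp add: SL2Z_def)
lemma J_carrier[simp]: "carrier Jacobi = {P. det (fst P) = 1}" by (simp add: Jacobi_def)
lemma J_mult[simp]: "P \<otimes>\<^bsub>Jacobi\<^esub> Q = (fst P ** fst Q, snd P v* fst Q + snd Q)" by (simp add: Jacobi_def)
lemma J_one[simp]: "\<one>\<^bsub>Jacobi\<^esub> = (mat 1, 0)" by (simp add: Jacobi_def)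
lemma Zsq_carrier[simp]: "carrier Zsq = UNIV" by (simp add: Zsq_def)
lemma Zsq_mult[simp]: "mult Zsq u w = u + w" by (simp add: Zsq_def)
lemma Zsq_one[simp]: "one Zsq = 0" by (simp add: Zsq_def)

lemma monoid_SL: "monoid SL2Z"
  by (rule monoidI) (auto simp: det_mul matrix_mul_assoc)

lemma monoid_J: "monoid Jacobi"
proof (rule monoidI)
  fix x y z :: "(int^2^2) \<times> (int^2)"
  show "x \<otimes>\<^bsub>Jacobi\<^esub> y \<otimes>\<^bsub>Jacobi\<^esub> z = x \<otimes>\<^bsub>Jacobi\<^esub> (y \<otimes>\<^bsub>Jacobi\<^esub> z)"
    by (simp add: matrix_mul_assoc vector_matrix_left_distrib vector_matrix_mul_assoc add.assoc)
qed (auto simp: det_mul)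

lemma monoid_Zsq: "monoid Zsq"
  by (rule monoidI) (auto simp: add.assoc)

definition sigJ :: "int^2^2 \<Rightarrow> (int^2^2) \<times> (int^2)" where
  "sigJ M = (M, 0)"

lemma homlike_rho: "homlike Jacobi SL2Z rhoJ"
  by (simp add: homlike_def rhoJ_def)

lemma homlike_i: "homlike Zsq Jacobi iJ"
  by (simp add: homlike_def iJ_def)

lemma homlike_sig: "homlike SL2Z Jacobi sigJ"
  by (simp add: homlike_def sigJ_def)

definition e1 :: "int^2" where "e1 = vector [1,0]"
definition e2 :: "int^2" where "e2 = vector [0,1]"

lemma vec2_eq: "(u::int^2) = w \<longleftrightarrow> u$1 = w$1 \<and> u$2 = w$2"
  by (simp add: vec_eq_iff forall_2)

lemma vm_1[simp]: "((u::int^2) v* M)$1 = u$1 * M$1$1 + u$2 * M$2$1"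
  by (simp add: vector_matrix_mult_def sum_2)
lemma vm_2[simp]: "((u::int^2) v* M)$2 = u$1 * M$1$2 + u$2 * M$2$2"
  by (simp add: vector_matrix_mult_def sum_2)
lemma mm_c: "((A::int^2^2) ** B)$i$j = A$i$1 * B$1$j + A$i$2 * B$2$j"
  by (simp add: matrix_matrix_mult_def sum_2)

lemma additive_scal:
  fixes v :: "int^2 \<Rightarrow> int"
  assumes add: "\<And>u w. v (u + w) = v u + v w"
  shows "v (of_int k *s w) = k * v w"
proof -
  have z: "v 0 = 0" using add[of 0 0] by simp
  show ?thesis
  proof (induction k rule: int_induct[where k=0])
    case base then show ?case using z by simp
  next
    case (step1 i)
    have e: "of_int (i+1) *s w = of_int i *s w + w" by (simp add: algebra_simps)
    have "v (of_int (i+1) *s w) = v (of_int i *s w) + v w" by (subst e) (rule add)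
    then show ?case using step1 by (simp add: algebra_simps)
  next
    case (step2 i)
    have e: "of_int i *s w = of_int (i - 1) *s w + w" by (simp add: algebra_simps)
    have "v (of_int i *s w) = v (of_int (i - 1) *s w) + v w" by (subst e) (rule add)
    then show ?case using step2 by (simp add: algebra_simps)
  qed
qed

lemma additive_linear:
  fixes v :: "int^2 \<Rightarrow> int"
  assumes add: "\<And>u w. v (u + w) = v u + v w"
  shows "v u = u$1 * v e1 + u$2 * v e2"
proof -
  have "u = of_int (u$1) *s e1 + of_int (u$2) *s e2"
    by (simp add: vec2_eq e1_def e2_def)
  then have "v u = v (of_int (u$1) *s e1) + v (of_int (u$2) *s e2)" using add by metis
  then show ?thesis using additive_scal[OF add] by simp
qed

definition mI :: "int^2^2" where "mI = mat (-1)"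

lemma mI_c[simp]: "mI$1$1 = -1" "mI$1$2 = 0" "mI$2$1 = 0" "mI$2$2 = -1"
  by (simp_all add: mI_def mat_def)

lemma det_mI: "det mI = 1"
  by (simp add: det_2)

lemma mat2_eq: "(A::int^2^2) = B \<longleftrightarrow> A$1$1 = B$1$1 \<and> A$1$2 = B$1$2 \<and> A$2$1 = B$2$1 \<and> A$2$2 = B$2$2"
  by (auto simp add: vec_eq_iff forall_2)

lemma mI_comm: "mI ** M = M ** mI"
  by (simp add: mat2_eq mm_c)

lemma vm_mI: "u v* mI = - u"
  by (simp add: vec2_eq)

definition Tm :: "int^2^2" where "Tm = vector [vector [1,1], vector [0,1]]"
definition Sm :: "int^2^2" where "Sm = vector [vector [0,-1], vector [1,0]]"

lemma Tm_c[simp]: "Tm$1$1 = 1" "Tm$1$2 = 1" "Tm$2$1 = 0" "Tm$2$2 = 1"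
  by (simp_all add: Tm_def)
lemma Sm_c[simp]: "Sm$1$1 = 0" "Sm$1$2 = -1" "Sm$2$1 = 1" "Sm$2$2 = 0"
  by (simp_all add: Sm_def)
lemma e_c[simp]: "e1$1 = 1" "e1$2 = 0" "e2$1 = 0" "e2$2 = 1"
  by (simp_all add: e1_def e2_def)

lemma det_Tm: "det Tm = 1" by (simp add: det_2)
lemma det_Sm: "det Sm = 1" by (simp add: det_2)

lemma crossed_principal:
  fixes b :: "int^2 \<Rightarrow> int^2^2 \<Rightarrow> int"
  assumes add: "\<And>M u w. det M = 1 \<Longrightarrow> b (u + w) M = b u M + b w M"
    and cr: "\<And>M M' u. det M = 1 \<Longrightarrow> det M' = 1 \<Longrightarrow> b u (M ** M') = b u M + b (u v* M) M'"
  shows "\<exists>\<psi>. (\<forall>u w. \<psi> (u + w) = \<psi> u + \<psi> w) \<and> (\<forall>M u. det M = 1 \<longrightarrow> b u M = \<psi> u - \<psi> (u v* M))"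
proof -
  define v where "v u = b u mI" for u
  have vadd: "v (u + w) = v u + v w" for u w unfolding v_def using add det_mI by blast
  have neg: "b (- u) M = - b u M" if "det M = 1" for u M
  proof -
    have "b (u + - u) M = b u M + b (- u) M" using add that by blast
    moreover have "b 0 M = 0" using add[OF that, of 0 0] by simp
    ultimately show ?thesis by simp
  qed
  have two: "2 * b u M = v u - v (u v* M)" if M: "det M = 1" for u M
  proof -
    have "b u (mI ** M) = v u + b (u v* mI) M" unfolding v_def using cr det_mI M by blast
    also have "... = v u - b u M" using neg M by (simp add: vm_mI)
    finally have 1: "b u (mI ** M) = v u - b u M" .
    have 2: "b u (M ** mI) = b u M + v (u v* M)" unfolding v_def using cr det_mI M by blast
    show ?thesis using 1 2 mI_comm[of M] by simp
  qed
  have ev2: "even (v e2)"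
  proof -
    have "2 * b e1 Tm = v e1 - v (e1 v* Tm)" using two det_Tm by blast
    moreover have "e1 v* Tm = e1 + e2" by (simp add: vec2_eq)
    ultimately have "2 * b e1 Tm = - v e2" using vadd by simp
    then show ?thesis by presburger
  qed
  have ev1: "even (v e1)"
  proof -
    have "2 * b e2 Sm = v e2 - v (e2 v* Sm)" using two det_Sm by blast
    moreover have "e2 v* Sm = e1" by (simp add: vec2_eq)
    ultimately have "2 * b e2 Sm = v e2 - v e1" by simp
    then show ?thesis using ev2 by presburger
  qed
  define \<psi> where "\<psi> u = u$1 * (v e1 div 2) + u$2 * (v e2 div 2)" for u :: "int^2"
  have p2: "2 * \<psi> u = v u" for u
    unfolding \<psi>_def additive_linear[OF vadd, of u] using ev1 ev2
    by (simp add: algebra_simps)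
  show ?thesis
  proof (rule exI[of _ \<psi>], intro conjI allI impI)
    fix u w show "\<psi> (u + w) = \<psi> u + \<psi> w" unfolding \<psi>_def by (simp add: algebra_simps)
  next
    fix M :: "int^2^2" and u :: "int^2" assume "det M = 1"
    then have "2 * b u M = 2 * \<psi> u - 2 * \<psi> (u v* M)" using two p2 by simp
    then show "b u M = \<psi> u - \<psi> (u v* M)" by simp
  qed
qed



lemma cocJ:
  assumes "cocyc Jacobi g" "det Ma = 1" "det Mb = 1" "det Mc = 1"
  shows "g ((Mb,xb),(Mc,xc)) - g ((Ma ** Mb, xa v* Mb + xb),(Mc,xc))
       + g ((Ma,xa),(Mb ** Mc, xb v* Mc + xc)) - g ((Ma,xa),(Mb,xb)) = 0"
proof -
  have "g ((Mb,xb),(Mc,xc)) - g ((Ma,xa) \<otimes>\<^bsub>Jacobi\<^esub> (Mb,xb),(Mc,xc))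
       + g ((Ma,xa),(Mb,xb) \<otimes>\<^bsub>Jacobi\<^esub> (Mc,xc)) - g ((Ma,xa),(Mb,xb)) = 0"
    using assms unfolding cocyc_def by (simp only: J_carrier mem_Collect_eq fst_conv)
  then show ?thesis by simp
qed

lemma cocyc_delta_add:
  assumes "monoid G" "cocyc G g"
  shows "cocyc G (\<lambda>p. g p + (\<phi> (snd p) - \<phi> (fst p \<otimes>\<^bsub>G\<^esub> snd p) + \<phi> (fst p)))"
proof -
  have "cocyc G (\<lambda>(x,y). \<phi> y - \<phi> (x \<otimes>\<^bsub>G\<^esub> y) + \<phi> x)"
    by (rule cobd_cocyc[OF assms(1) cobd_delta])
  then have "cocyc G (\<lambda>p. g p + (\<lambda>(x,y). \<phi> y - \<phi> (x \<otimes>\<^bsub>G\<^esub> y) + \<phi> x) p)"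
    by (rule cocyc_add[OF assms(2)])
  then show ?thesis by (rule cocyc_cong[OF assms(1)]) (simp add: case_prod_beta)
qed

lemma cocyc_delta_diff:
  assumes "monoid G" "cocyc G g"
  shows "cocyc G (\<lambda>p. g p - (\<phi> (snd p) - \<phi> (fst p \<otimes>\<^bsub>G\<^esub> snd p) + \<phi> (fst p)))"
proof -
  have "cocyc G (\<lambda>(x,y). \<phi> y - \<phi> (x \<otimes>\<^bsub>G\<^esub> y) + \<phi> x)"
    by (rule cobd_cocyc[OF assms(1) cobd_delta])
  then have "cocyc G (\<lambda>p. g p + - (\<lambda>(x,y). \<phi> y - \<phi> (x \<otimes>\<^bsub>G\<^esub> y) + \<phi> x) p)"
    by (rule cocyc_add[OF assms(2) cocyc_neg])
  then show ?thesis by (rule cocyc_cong[OF assms(1)]) (simp add: case_prod_beta)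
qed

lemma cobd_delta_add:
  assumes "cobd G (\<lambda>p. g p + (\<phi> (snd p) - \<phi> (fst p \<otimes>\<^bsub>G\<^esub> snd p) + \<phi> (fst p)))"
  shows "cobd G g"
proof -
  have "cobd G (\<lambda>p. (\<lambda>p. g p + (\<phi> (snd p) - \<phi> (fst p \<otimes>\<^bsub>G\<^esub> snd p) + \<phi> (fst p))) p
      - (\<lambda>(x,y). \<phi> y - \<phi> (x \<otimes>\<^bsub>G\<^esub> y) + \<phi> x) p)"
    by (rule cobd_diff[OF assms cobd_delta])
  then show ?thesis by (rule cobd_cong) (simp add: case_prod_beta)
qed

lemma cobd_delta_diff:
  assumes "cobd G (\<lambda>p. g p - (\<phi> (snd p) - \<phi> (fst p \<otimes>\<^bsub>G\<^esub> snd p) + \<phi> (fst p)))"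
  shows "cobd G g"
proof -
  have "cobd G (\<lambda>p. (\<lambda>p. g p - (\<phi> (snd p) - \<phi> (fst p \<otimes>\<^bsub>G\<^esub> snd p) + \<phi> (fst p))) p
      + (\<lambda>(x,y). \<phi> y - \<phi> (x \<otimes>\<^bsub>G\<^esub> y) + \<phi> x) p)"
    by (rule cobd_add[OF assms cobd_delta])
  then show ?thesis by (rule cobd_cong) (simp add: case_prod_beta)
qed

lemma mid_exact:
  fixes f :: "((int^2^2) \<times> (int^2)) \<times> ((int^2^2) \<times> (int^2)) \<Rightarrow> int"
  assumes f: "cocyc Jacobi f"
    and psi: "\<And>x y. f ((mat 1, x), (mat 1, y)) = \<psi> y - \<psi> (x + y) + \<psi> x"
  shows "cobd Jacobi (\<lambda>p. f p - f ((fst (fst p), 0), (fst (snd p), 0)))"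
proof -
  define g where "g p = f p - f ((fst (fst p), 0), (fst (snd p), 0))" for p
  have gc: "cocyc Jacobi g" unfolding cocyc_def
  proof (intro ballI)
    fix a b c assume abc: "a \<in> carrier Jacobi" "b \<in> carrier Jacobi" "c \<in> carrier Jacobi"
    have 1: "f (b, c) - f (a \<otimes>\<^bsub>Jacobi\<^esub> b, c) + f (a, b \<otimes>\<^bsub>Jacobi\<^esub> c) - f (a, b) = 0"
      using f abc unfolding cocyc_def by blast
    have 2: "f ((fst b,0), (fst c,0)) - f ((fst a,0) \<otimes>\<^bsub>Jacobi\<^esub> (fst b,0), (fst c,0))
       + f ((fst a,0), (fst b,0) \<otimes>\<^bsub>Jacobi\<^esub> (fst c,0)) - f ((fst a,0), (fst b,0)) = 0"
      using f abc unfolding cocyc_def by (simp only: J_carrier mem_Collect_eq fst_conv)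
    show "g (b, c) - g (a \<otimes>\<^bsub>Jacobi\<^esub> b, c) + g (a, b \<otimes>\<^bsub>Jacobi\<^esub> c) - g (a, b) = 0"
      using 1 2 unfolding g_def by simp
  qed
  define \<phi>1 where "\<phi>1 p = \<psi> (snd p) - \<psi> 0" for p :: "(int^2^2) \<times> (int^2)"
  define g1 where "g1 p = g p - (\<phi>1 (snd p) - \<phi>1 (fst p \<otimes>\<^bsub>Jacobi\<^esub> snd p) + \<phi>1 (fst p))" for p
  have g1c: "cocyc Jacobi g1" unfolding g1_def by (rule cocyc_delta_diff[OF monoid_J gc])
  have Q1: "g1 ((M,0),(N,0)) = 0" for M N
    unfolding g1_def g_def \<phi>1_def by simp
  have f00: "f ((mat 1, 0), (mat 1, 0)) = \<psi> 0" using psi[of 0 0] by simp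
  have N1: "g1 ((mat 1,x),(mat 1,y)) = 0" for x y
    unfolding g1_def g_def \<phi>1_def using psi[of x y] f00 by simp
  define \<phi>2 where "\<phi>2 p = g1 ((fst p, 0), (mat 1, snd p))" for p :: "(int^2^2) \<times> (int^2)"
  define g2 where "g2 p = g1 p + (\<phi>2 (snd p) - \<phi>2 (fst p \<otimes>\<^bsub>Jacobi\<^esub> snd p) + \<phi>2 (fst p))" for p
  have g2c: "cocyc Jacobi g2" unfolding g2_def by (rule cocyc_delta_add[OF monoid_J g1c])
  have Q2: "g2 ((M,0),(N,0)) = 0" for M N
    unfolding g2_def \<phi>2_def using Q1 by simp
  have N2: "g2 ((mat 1,x),(mat 1,y)) = 0" for x y
    unfolding g2_def \<phi>2_def using N1 by simp
  have QN2: "g2 ((M,0),(mat 1,x)) = 0" for M x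
    unfolding g2_def \<phi>2_def using Q1 N1[of 0] by simp
  have i: "g2 ((M,x),(mat 1,y)) = 0" if "det M = 1" for M x y
    using cocJ[where xa="0" and xb=x and xc=y, OF g2c that det_I det_I] N2 QN2 by simp
  have ii: "g2 ((M,x),(N,y)) = g2 ((M,x),(N,0))" if "det M = 1" "det N = 1" for M N x y
  proof -
    have d: "det (M ** N) = 1" using that by (simp add: det_mul)
    show ?thesis
      using cocJ[where xa=x and xb="0" and xc=y, OF g2c that det_I] QN2 i[OF d] by simp
  qed
  have iii: "g2 ((M,x),(N,0)) = g2 ((mat 1,x),(N,0))" if "det M = 1" "det N = 1" for M N x
    using cocJ[where xa="0" and xb=x and xc="0", OF g2c that(1) det_I that(2)] ii[OF that, of 0 "x v* N"] Q2 QN2 by simp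
  define b where "b x N = g2 ((mat 1, x), (N, 0))" for x N
  have gen: "g2 ((M,x),(N,y)) = b x N" if "det M = 1" "det N = 1" for M N x y
    unfolding b_def using ii[OF that] iii[OF that] by simp
  have badd: "b (x + y) N = b x N + b y N" if "det N = 1" for N x y
  proof -
    have "g2 ((mat 1,y),(N,0)) - g2 ((mat 1, x + y),(N,0)) + g2 ((mat 1,x),(N, y v* N))
          - g2 ((mat 1,x),(mat 1,y)) = 0"
      using cocJ[where xa=x and xb=y and xc="0", OF g2c det_I det_I that] by simp
    then show ?thesis unfolding b_def by (simp add: gen[OF det_I that] N2)
  qed
  have bcr: "b x (M ** N) = b x M + b (x v* M) N" if "det M = 1" "det N = 1" for M N x
  proof -
    have d: "det (M ** N) = 1" using that by (simp add: det_mul)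
    have "g2 ((M,0),(N,0)) - g2 ((M, x v* M),(N,0)) + g2 ((mat 1,x),(M ** N, 0))
          - g2 ((mat 1,x),(M,0)) = 0"
      using cocJ[where xa=x and xb="0" and xc="0", OF g2c det_I that] by simp
    then show ?thesis by (simp add: Q2 gen[OF that] gen[OF det_I that(1)] gen[OF det_I d])
  qed
  obtain \<psi>1 where p1: "\<forall>x y. \<psi>1 (x + y) = \<psi>1 x + \<psi>1 y"
    and p2: "\<forall>M x. det M = 1 \<longrightarrow> b x M = \<psi>1 x - \<psi>1 (x v* M)"
    using crossed_principal[of b] badd bcr by blast
  have cg2: "cobd Jacobi g2" unfolding cobd_def
  proof (rule exI[of _ "\<lambda>p. \<psi>1 (snd p)"], intro ballI)
    fix a c assume ac: "a \<in> carrier Jacobi" "c \<in> carrier Jacobi"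
    obtain M x where a: "a = (M,x)" "det M = 1" using ac by (cases a) auto
    obtain N y where c: "c = (N,y)" "det N = 1" using ac by (cases c) auto
    show "g2 (a, c) = \<psi>1 (snd c) - \<psi>1 (snd (a \<otimes>\<^bsub>Jacobi\<^esub> c)) + \<psi>1 (snd a)"
      using gen[OF a(2) c(2)] p1 p2 a c by simp
  qed
  have cg1: "cobd Jacobi g1"
    by (rule cobd_delta_add[of Jacobi g1 \<phi>2]) (use cg2 in \<open>simp only: g2_def[abs_def]\<close>)
  have cg: "cobd Jacobi g"
    by (rule cobd_delta_diff[of Jacobi g \<phi>1]) (use cg1 in \<open>simp only: g1_def[abs_def]\<close>)
  then show ?thesis unfolding g_def .
qed



definition K2 :: "int^2 \<Rightarrow> int" where "K2 z = (z$1 - 1) * (z$2 - 1) - 1"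
definition hJ :: "int^2^2 \<Rightarrow> int^2 \<Rightarrow> int" where "hJ M x = (K2 (x v* M) - K2 x) div 2"
definition Bf :: "int^2 \<Rightarrow> int^2 \<Rightarrow> int" where "Bf x y = x$1 * y$2"
definition Ef :: "((int^2^2) \<times> (int^2)) \<times> ((int^2^2) \<times> (int^2)) \<Rightarrow> int" where
  "Ef p = Bf (snd (fst p) v* fst (snd p)) (snd (snd p)) + hJ (fst (snd p)) (snd (fst p))"

lemma det2: "det (M::int^2^2) = M$1$1 * M$2$2 - M$1$2 * M$2$1"
  by (rule det_2)

lemma even_K2_diff:
  assumes "det M = 1"
  shows "even (K2 (x v* M) - K2 x)"
proof -
  define a where "a = M$1$1" define b where "b = M$1$2"
  define c where "c = M$2$1" define d where "d = M$2$2"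
  have dt: "a * d - b * c = 1" using assms unfolding a_def b_def c_def d_def det2 .
  define z1 where "z1 = x$1 * a + x$2 * c"
  define z2 where "z2 = x$1 * b + x$2 * d"
  have z: "(x v* M)$1 = z1" "(x v* M)$2 = z2" unfolding z1_def z2_def a_def b_def c_def d_def by simp_all
  have x1: "x$1 = d * z1 - c * z2"
  proof -
    have "d * z1 - c * z2 = x$1 * (a * d - b * c)" unfolding z1_def z2_def by (simp add: algebra_simps)
    then show ?thesis using dt by simp
  qed
  have x2: "x$2 = a * z2 - b * z1"
  proof -
    have "a * z2 - b * z1 = x$2 * (a * d - b * c)" unfolding z1_def z2_def by (simp add: algebra_simps)
    then show ?thesis using dt by simp
  qed
  have iff: "(even z1 \<and> even z2) \<longleftrightarrow> (even (x$1) \<and> even (x$2))"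
  proof
    assume "even z1 \<and> even z2" then show "even (x$1) \<and> even (x$2)" using x1 x2 by simp
  next
    assume "even (x$1) \<and> even (x$2)" then show "even z1 \<and> even z2" unfolding z1_def z2_def by simp
  qed
  have "K2 (x v* M) - K2 x = (z1 - 1) * (z2 - 1) - (x$1 - 1) * (x$2 - 1)"
    unfolding K2_def z by simp
  moreover have "even ((z1 - 1) * (z2 - 1)) \<longleftrightarrow> even ((x$1 - 1) * (x$2 - 1))"
    using iff by (simp; blast)
  ultimately show ?thesis by simp
qed

lemma hJ2: "det M = 1 \<Longrightarrow> 2 * hJ M x = K2 (x v* M) - K2 x"
  unfolding hJ_def using even_K2_diff by simp

lemma hJ_I[simp]: "hJ (mat 1) x = 0"
  unfolding hJ_def by simp

lemma hJ_comp:
  assumes "det M = 1" "det N = 1"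
  shows "hJ (M ** N) x = hJ M x + hJ N (x v* M)"
proof -
  have d: "det (M ** N) = 1" using assms by (simp add: det_mul)
  have "2 * hJ (M ** N) x = 2 * hJ M x + 2 * hJ N (x v* M)"
    using hJ2[OF d] hJ2[OF assms(1)] hJ2[OF assms(2)] by (simp add: vector_matrix_mul_assoc)
  then show ?thesis by simp
qed

lemma poly_id:
  fixes a b c d x1 x2 y1 y2 :: int
  assumes "a * d - b * c = 1"
  shows "((x1 * a + x2 * c + y1 * a + y2 * c) - 1) * ((x1 * b + x2 * d + y1 * b + y2 * d) - 1)
         - ((x1 + y1) - 1) * ((x2 + y2) - 1)
       = ((x1 * a + x2 * c) - 1) * ((x1 * b + x2 * d) - 1) - (x1 - 1) * (x2 - 1)
       + ((y1 * a + y2 * c) - 1) * ((y1 * b + y2 * d) - 1) - (y1 - 1) * (y2 - 1)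
       + 2 * ((x1 * a + x2 * c) * (y1 * b + y2 * d)) - 2 * (x1 * y2)"
proof -
  have "((x1 * a + x2 * c + y1 * a + y2 * c) - 1) * ((x1 * b + x2 * d + y1 * b + y2 * d) - 1)
         - ((x1 + y1) - 1) * ((x2 + y2) - 1)
       - (((x1 * a + x2 * c) - 1) * ((x1 * b + x2 * d) - 1) - (x1 - 1) * (x2 - 1)
       + ((y1 * a + y2 * c) - 1) * ((y1 * b + y2 * d) - 1) - (y1 - 1) * (y2 - 1)
       + 2 * ((x1 * a + x2 * c) * (y1 * b + y2 * d)) - 2 * (x1 * y2))
       = (a * d - b * c - 1) * (y1 * x2 - x1 * y2)"
    by (simp add: algebra_simps)
  then show ?thesis using assms by simp
qed

lemma hJ_add:
  assumes "det M = 1"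
  shows "hJ M (x + y) = hJ M x + hJ M y + Bf (x v* M) (y v* M) - Bf x y"
proof -
  have dt: "M$1$1 * M$2$2 - M$1$2 * M$2$1 = 1" using assms unfolding det2 .
  have "2 * hJ M (x + y) = 2 * hJ M x + 2 * hJ M y + 2 * Bf (x v* M) (y v* M) - 2 * Bf x y"
    unfolding hJ2[OF assms] K2_def Bf_def
    using poly_id[OF dt, of "x$1" "x$2" "y$1" "y$2"] by (simp add: algebra_simps)
  then show ?thesis by simp
qed

lemma Ef_val[simp]: "Ef ((M,x),(N,y)) = Bf (x v* N) y + hJ N x"
  by (simp add: Ef_def)

lemma Bf_add1: "Bf (x + y) z = Bf x z + Bf y z" by (simp add: Bf_def algebra_simps)
lemma Bf_add2: "Bf x (y + z) = Bf x y + Bf x z" by (simp add: Bf_def algebra_simps)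

lemma Ef_cocyc: "cocyc Jacobi Ef"
  unfolding cocyc_def
proof (intro ballI)
  fix a b c assume abc: "a \<in> carrier Jacobi" "b \<in> carrier Jacobi" "c \<in> carrier Jacobi"
  obtain M1 x1 where a: "a = (M1,x1)" "det M1 = 1" using abc by (cases a) auto
  obtain M2 x2 where b: "b = (M2,x2)" "det M2 = 1" using abc by (cases b) auto
  obtain M3 x3 where c: "c = (M3,x3)" "det M3 = 1" using abc by (cases c) auto
  have h1: "hJ M3 (x1 v* M2 + x2) = hJ M3 (x1 v* M2) + hJ M3 x2 + Bf (x1 v* M2 v* M3) (x2 v* M3) - Bf (x1 v* M2) x2"
    using hJ_add[OF c(2)] by (simp add: vector_matrix_mul_assoc)
  have h2: "hJ (M2 ** M3) x1 = hJ M2 x1 + hJ M3 (x1 v* M2)"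
    by (rule hJ_comp[OF b(2) c(2)])
  show "Ef (b, c) - Ef (a \<otimes>\<^bsub>Jacobi\<^esub> b, c) + Ef (a, b \<otimes>\<^bsub>Jacobi\<^esub> c) - Ef (a, b) = 0"
    unfolding a b c
    by (simp add: h1 h2 Bf_add1 Bf_add2 vector_matrix_left_distrib vector_matrix_mul_assoc)
qed

definition EJ where "EJ = restrict Ef (carrier Jacobi \<times> carrier Jacobi)"

lemma EJ_cocycle: "cocycle2 Jacobi EJ"
  unfolding EJ_def by (rule cocycle2_restrict[OF monoid_J Ef_cocyc])

lemma EJ_pull: "x \<in> carrier Zsq \<Longrightarrow> y \<in> carrier Zsq \<Longrightarrow> pull2 Zsq iJ EJ (x,y) = x$1 * y$2"
  by (simp add: EJ_def iJ_def Bf_def)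



definition kap :: "((int^2) \<times> (int^2) \<Rightarrow> int) \<Rightarrow> int" where "kap f = f (e1,e2) - f (e2,e1)"

lemma cocZ: "cocyc Zsq f \<Longrightarrow> f (y,z) - f (x + y, z) + f (x, y + z) - f (x,y) = 0"
  unfolding cocyc_def by simp

lemma cocZI: "(\<And>x y z. f (y,z) - f (x + y, z) + f (x, y + z) - f (x,y) = 0) \<Longrightarrow> cocyc Zsq f"
  unfolding cocyc_def by simp

lemma comm_add:
  assumes c: "cocyc Zsq f"
  shows "f (x, y + z) - f (y + z, x) = (f (x,y) - f (y,x)) + (f (x,z) - f (z,x))"
proof -
  have 1: "f (y,z) - f (x + y, z) + f (x, y + z) - f (x,y) = 0" by (rule cocZ[OF c])
  have 2: "f (z,y) - f (x + z, y) + f (x, z + y) - f (x,z) = 0" by (rule cocZ[OF c])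
  have 3: "f (x,z) - f (y + x, z) + f (y, x + z) - f (y,x) = 0" by (rule cocZ[OF c])
  have 4: "f (z,x) - f (y + z, x) + f (y, z + x) - f (y,z) = 0" by (rule cocZ[OF c])
  have 5: "f (x,y) - f (z + x, y) + f (z, x + y) - f (z,x) = 0" by (rule cocZ[OF c])
  have 6: "f (y,x) - f (z + y, x) + f (z, y + x) - f (z,y) = 0" by (rule cocZ[OF c])
  show ?thesis using 1 2 3 4 5 6 by (simp only: add_ac; linarith)
qed

lemma comm_formula:
  assumes c: "cocyc Zsq f"
  shows "f (x,y) - f (y,x) = kap f * (x$1 * y$2 - x$2 * y$1)"
proof -
  define cm where "cm x y = f (x,y) - f (y,x)" for x y
  have add2: "cm x (y + z) = cm x y + cm x z" for x y z
    unfolding cm_def using comm_add[OF c] by simp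
  have anti: "cm x y = - cm y x" for x y unfolding cm_def by simp
  have l1: "cm x y = y$1 * cm x e1 + y$2 * cm x e2" for x y
    by (rule additive_linear[of "cm x"]) (rule add2)
  have k: "cm e1 e2 = kap f" unfolding cm_def kap_def by simp
  have z: "cm x x = 0" for x unfolding cm_def by simp
  have "cm e1 x = x$2 * kap f" using l1[of e1 x] z k by simp
  moreover have "cm e2 x = - x$1 * kap f" using l1[of e2 x] z k anti[of e2 e1] by simp
  ultimately have "cm x y = y$1 * (- (x$2 * kap f)) + y$2 * (x$1 * kap f)"
    using l1[of x y] anti[of x e1] anti[of x e2] by simp
  then show ?thesis unfolding cm_def by (simp add: algebra_simps)
qed

definition EG :: "((int^2) \<times> (int^2) \<Rightarrow> int) \<Rightarrow> (int \<times> (int^2)) monoid" where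
  "EG f = \<lparr>carrier = UNIV, mult = (\<lambda>p q. (fst p + fst q + f (snd p, snd q), snd p + snd q)), one = (0, 0)\<rparr>"

lemma EG_simps[simp]: "carrier (EG f) = UNIV" "one (EG f) = (0,0)"
   "mult (EG f) p q = (fst p + fst q + f (snd p, snd q), snd p + snd q)"
  by (simp_all add: EG_def)

lemma EG_comm_group:
  assumes c: "cocyc Zsq f" and sym: "\<And>x y. f (x,y) = f (y,x)"
    and n1: "\<And>y. f (0,y) = 0"
  shows "comm_group (EG f)"
proof (rule comm_groupI)
  fix x y z :: "int \<times> (int^2)"
  have "f (snd y, snd z) - f (snd x + snd y, snd z) + f (snd x, snd y + snd z) - f (snd x, snd y) = 0"
    by (rule cocZ[OF c])
  then show "mult (EG f) (mult (EG f) x y) z = mult (EG f) x (mult (EG f) y z)"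
    by (simp add: add.assoc; linarith)
next
  fix x y :: "int \<times> (int^2)"
  show "mult (EG f) x y = mult (EG f) y x" using sym[of "snd x" "snd y"] by (simp add: add.commute)
next
  fix x :: "int \<times> (int^2)"
  show "mult (EG f) (one (EG f)) x = x" using n1 by simp
next
  fix x :: "int \<times> (int^2)"
  show "\<exists>y\<in>carrier (EG f). mult (EG f) y x = one (EG f)"
    by (rule bexI[of _ "(- fst x - f (- snd x, snd x), - snd x)"]) auto
qed auto

lemma snd_pow:
  assumes g: "group (EG f)"
  shows "snd (p [^]\<^bsub>EG f\<^esub> (n::int)) = of_int n *s snd p"
proof (induction n rule: int_induct[where k=0])
  case base then show ?case by simp
next
  case (step1 i)
  have "p [^]\<^bsub>EG f\<^esub> (i + 1) = mult (EG f) (p [^]\<^bsub>EG f\<^esub> i) (p [^]\<^bsub>EG f\<^esub> (1::int))"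
    using group.int_pow_mult[OF g, of p i 1] by simp
  also have "p [^]\<^bsub>EG f\<^esub> (1::int) = p" using group.int_pow_1[OF g, of p] by simp
  finally show ?case using step1 by (simp add: algebra_simps)
next
  case (step2 i)
  have "p [^]\<^bsub>EG f\<^esub> i = mult (EG f) (p [^]\<^bsub>EG f\<^esub> (i - 1)) (p [^]\<^bsub>EG f\<^esub> (1::int))"
    using group.int_pow_mult[OF g, of p "i - 1" 1] by simp
  also have "p [^]\<^bsub>EG f\<^esub> (1::int) = p" using group.int_pow_1[OF g, of p] by simp
  finally have "snd (p [^]\<^bsub>EG f\<^esub> i) = snd (p [^]\<^bsub>EG f\<^esub> (i - 1)) + snd p" by simp
  then show ?case using step2 by (simp add: algebra_simps)
qed

lemma sym_cobd0:
  assumes c: "cocyc Zsq f" and sym: "\<And>x y. f (x,y) = f (y,x)"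
    and n1: "\<And>y. f (0,y) = 0"
  shows "cobd Zsq f"
proof -
  interpret G: comm_group "EG f" by (rule EG_comm_group[OF c sym n1])
  define u :: "int \<times> (int^2)" where "u = (0, e1)"
  define w :: "int \<times> (int^2)" where "w = (0, e2)"
  define s where "s x = mult (EG f) (u [^]\<^bsub>EG f\<^esub> (x$1)) (w [^]\<^bsub>EG f\<^esub> (x$2))" for x :: "int^2"
  have ss: "snd (s x) = x" for x
    unfolding s_def using snd_pow[OF G.is_group, of u] snd_pow[OF G.is_group, of w]
    by (simp add: u_def w_def vec2_eq)
  have sadd: "s (x + y) = mult (EG f) (s x) (s y)" for x y
  proof -
    have "s (x + y) = mult (EG f) (mult (EG f) (u [^]\<^bsub>EG f\<^esub> (x$1)) (u [^]\<^bsub>EG f\<^esub> (y$1)))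
                         (mult (EG f) (w [^]\<^bsub>EG f\<^esub> (x$2)) (w [^]\<^bsub>EG f\<^esub> (y$2)))"
      unfolding s_def by (simp add: G.int_pow_mult)
    also have "... = mult (EG f) (s x) (s y)"
      unfolding s_def by (simp only: G.m_ac EG_simps(1) UNIV_I)
    finally show ?thesis .
  qed
  show ?thesis unfolding cobd_def
  proof (rule exI[of _ "\<lambda>x. - fst (s x)"], intro ballI)
    fix x y :: "int^2"
    have "fst (s (x + y)) = fst (s x) + fst (s y) + f (x, y)"
      using sadd[of x y] ss[of x] ss[of y] by simp
    then show "f (x, y) = - fst (s y) - - fst (s (x \<otimes>\<^bsub>Zsq\<^esub> y)) + - fst (s x)" by simp
  qed
qed

lemma sym_cobd:
  assumes c: "cocyc Zsq f" and sym: "\<And>x y. f (x,y) = f (y,x)"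
  shows "cobd Zsq f"
proof -
  define c0 where "c0 = f (0,0)"
  have n: "f (0,y) = c0" for y using cocZ[OF c, of 0 y 0] unfolding c0_def by simp
  have c': "cocyc Zsq (\<lambda>p. f p + - c0)" by (rule cocyc_add[OF c]) (simp add: cocyc_def)
  have "cobd Zsq (\<lambda>p. f p + - c0)"
    by (rule sym_cobd0[OF c']) (use sym n in auto)
  moreover have "cobd Zsq (\<lambda>p. c0)" unfolding cobd_def by (rule exI[of _ "\<lambda>x. c0"]) simp
  ultimately have "cobd Zsq (\<lambda>p. (f p + - c0) + c0)" by (rule cobd_add)
  then show ?thesis by simp
qed

lemma Bz_cocyc: "cocyc Zsq (\<lambda>p. fst p $ 1 * snd p $ 2)"
  by (rule cocZI) (simp add: algebra_simps)

lemma Z_split: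
  assumes c: "cocyc Zsq f"
  shows "cobd Zsq (\<lambda>p. f p - kap f * (fst p $ 1 * snd p $ 2))"
proof -
  let ?g = "\<lambda>p. f p - kap f * (fst p $ 1 * snd p $ 2)"
  have gc: "cocyc Zsq ?g"
    using cocyc_add[OF c cocyc_neg[OF cocyc_scal[OF Bz_cocyc, of "kap f"]]] by simp
  have "kap ?g = 0" unfolding kap_def by simp
  then have "?g (x,y) = ?g (y,x)" for x y using comm_formula[OF gc, of x y] by simp
  then show ?thesis by (rule sym_cobd[OF gc])
qed

lemma kap_cobd: "cobd Zsq f \<Longrightarrow> kap f = 0"
  unfolding cobd_def kap_def by (auto simp: add.commute)



lemma group_Z2: "monoid G \<Longrightarrow> group (Z2grp G)"
  using comm_group_Z2 comm_group.axioms(2) by blast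

lemma rcos_cob_one:
  assumes "monoid G" "coboundary2 G h"
  shows "Cob G #>\<^bsub>Z2grp G\<^esub> h = Cob G"
  using subgroup.rcos_const[OF subgroup_Cob[OF assms(1)] group_Z2[OF assms(1)]] assms(2) by simp

lemma rcos_one_cob:
  assumes "monoid G" "cocycle2 G h" "Cob G #>\<^bsub>Z2grp G\<^esub> h = Cob G"
  shows "coboundary2 G h"
  using rcos_self_Z2[OF assms(1,2)] assms(3) by simp

lemma sig_carrier: "det M = 1 \<Longrightarrow> sigJ M \<in> carrier Jacobi" by (simp add: sigJ_def)

lemma rho_inj:
  assumes "C \<in> carrier (H2 SL2Z)" "D \<in> carrier (H2 SL2Z)"
    and eq: "H2_map Jacobi rhoJ C = H2_map Jacobi rhoJ D"
  shows "C = D"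
proof -
  obtain a where a: "cocycle2 SL2Z a" "C = Cob SL2Z #>\<^bsub>Z2grp SL2Z\<^esub> a"
    using assms(1) unfolding carrier_H2 by auto
  obtain b where b: "cocycle2 SL2Z b" "D = Cob SL2Z #>\<^bsub>Z2grp SL2Z\<^esub> b"
    using assms(2) unfolding carrier_H2 by auto
  have "Cob Jacobi #>\<^bsub>Z2grp Jacobi\<^esub> pull2 Jacobi rhoJ a = Cob Jacobi #>\<^bsub>Z2grp Jacobi\<^esub> pull2 Jacobi rhoJ b"
    using eq unfolding a(2) b(2) H2_map_coset[OF monoid_J monoid_SL homlike_rho a(1)]
      H2_map_coset[OF monoid_J monoid_SL homlike_rho b(1)] .
  then have "cobd Jacobi (\<lambda>p. pull2 Jacobi rhoJ a p - pull2 Jacobi rhoJ b p)"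
    using rcos_eq_iff[OF monoid_J pull_cocycle2[OF monoid_J homlike_rho a(1)]
      pull_cocycle2[OF monoid_J homlike_rho b(1)]] by simp
  then have "cobd SL2Z (pull2 SL2Z sigJ (\<lambda>p. pull2 Jacobi rhoJ a p - pull2 Jacobi rhoJ b p))"
    by (rule pull_cobd[OF homlike_sig])
  then have "cobd SL2Z (\<lambda>p. a p - b p)"
    by (rule cobd_cong) (simp add: sig_carrier rhoJ_def sigJ_def)
  then show ?thesis unfolding a(2) b(2) using rcos_eq_iff[OF monoid_SL a(1) b(1)] by simp
qed

lemma rho_image_kernel:
  "H2_map Jacobi rhoJ ` carrier (H2 SL2Z) = kernel (H2 Jacobi) (H2 Zsq) (H2_map Zsq iJ)"
proof
  show "H2_map Jacobi rhoJ ` carrier (H2 SL2Z) \<subseteq> kernel (H2 Jacobi) (H2 Zsq) (H2_map Zsq iJ)"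
  proof
    fix C assume "C \<in> H2_map Jacobi rhoJ ` carrier (H2 SL2Z)"
    then obtain a where a: "cocycle2 SL2Z a" "C = H2_map Jacobi rhoJ (Cob SL2Z #>\<^bsub>Z2grp SL2Z\<^esub> a)"
      unfolding carrier_H2 by auto
    have pa: "cocycle2 Jacobi (pull2 Jacobi rhoJ a)" by (rule pull_cocycle2[OF monoid_J homlike_rho a(1)])
    have C: "C = Cob Jacobi #>\<^bsub>Z2grp Jacobi\<^esub> pull2 Jacobi rhoJ a"
      using a(2) H2_map_coset[OF monoid_J monoid_SL homlike_rho a(1)] by simp
    have cc: "coboundary2 Zsq (pull2 Zsq iJ (pull2 Jacobi rhoJ a))"
      unfolding coboundary2_iff
    proof
      show "pull2 Zsq iJ (pull2 Jacobi rhoJ a) \<in> extensional (carrier Zsq \<times> carrier Zsq)" by (rule pull_ext)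
      show "cobd Zsq (pull2 Zsq iJ (pull2 Jacobi rhoJ a))" unfolding cobd_def
        by (rule exI[of _ "\<lambda>x. a (mat 1, mat 1)"]) (simp add: iJ_def rhoJ_def)
    qed
    have "H2_map Zsq iJ C = Cob Zsq"
      unfolding C H2_map_coset[OF monoid_Zsq monoid_J homlike_i pa]
      by (rule rcos_cob_one[OF monoid_Zsq cc])
    moreover have "C \<in> carrier (H2 Jacobi)" unfolding C carrier_H2 using pa by blast
    ultimately show "C \<in> kernel (H2 Jacobi) (H2 Zsq) (H2_map Zsq iJ)"
      unfolding kernel_def one_H2 by simp
  qed
next
  show "kernel (H2 Jacobi) (H2 Zsq) (H2_map Zsq iJ) \<subseteq> H2_map Jacobi rhoJ ` carrier (H2 SL2Z)"
  proof
    fix C assume "C \<in> kernel (H2 Jacobi) (H2 Zsq) (H2_map Zsq iJ)"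
    then have C1: "C \<in> carrier (H2 Jacobi)" and C2: "H2_map Zsq iJ C = Cob Zsq"
      unfolding kernel_def one_H2 by auto
    obtain f where f: "cocycle2 Jacobi f" "C = Cob Jacobi #>\<^bsub>Z2grp Jacobi\<^esub> f"
      using C1 unfolding carrier_H2 by auto
    have pf: "cocycle2 Zsq (pull2 Zsq iJ f)" by (rule pull_cocycle2[OF monoid_Zsq homlike_i f(1)])
    have "Cob Zsq #>\<^bsub>Z2grp Zsq\<^esub> pull2 Zsq iJ f = Cob Zsq"
      using C2 unfolding f(2) H2_map_coset[OF monoid_Zsq monoid_J homlike_i f(1)] .
    then have "coboundary2 Zsq (pull2 Zsq iJ f)" by (rule rcos_one_cob[OF monoid_Zsq pf])
    then obtain \<psi> where psi: "\<forall>x\<in>carrier Zsq. \<forall>y\<in>carrier Zsq.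
        pull2 Zsq iJ f (x,y) = \<psi> y - \<psi> (x \<otimes>\<^bsub>Zsq\<^esub> y) + \<psi> x"
      unfolding coboundary2_iff cobd_def by blast
    have psi': "f ((mat 1, x), (mat 1, y)) = \<psi> y - \<psi> (x + y) + \<psi> x" for x y
      using psi by (simp add: iJ_def)
    have fc: "cocyc Jacobi f" using f(1) by (simp add: cocycle2_iff)
    have me: "cobd Jacobi (\<lambda>p. f p - f ((fst (fst p), 0), (fst (snd p), 0)))"
      by (rule mid_exact[OF fc psi'])
    define a where "a = pull2 SL2Z sigJ f"
    have ac: "cocycle2 SL2Z a" unfolding a_def by (rule pull_cocycle2[OF monoid_SL homlike_sig f(1)])
    have pa: "cocycle2 Jacobi (pull2 Jacobi rhoJ a)" by (rule pull_cocycle2[OF monoid_J homlike_rho ac])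
    have "cobd Jacobi (\<lambda>p. f p - pull2 Jacobi rhoJ a p)"
      by (rule cobd_cong[OF me]) (simp add: a_def rhoJ_def sigJ_def)
    then have "C = Cob Jacobi #>\<^bsub>Z2grp Jacobi\<^esub> pull2 Jacobi rhoJ a"
      unfolding f(2) using rcos_eq_iff[OF monoid_J f(1) pa] by simp
    also have "... = H2_map Jacobi rhoJ (Cob SL2Z #>\<^bsub>Z2grp SL2Z\<^esub> a)"
      using H2_map_coset[OF monoid_J monoid_SL homlike_rho ac] by simp
    finally show "C \<in> H2_map Jacobi rhoJ ` carrier (H2 SL2Z)"
      unfolding carrier_H2 using ac by blast
  qed
qed

definition kapC :: "((int^2) \<times> (int^2) \<Rightarrow> int) set \<Rightarrow> int" where
  "kapC C = kap (SOME f. f \<in> C)"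

lemma kapC_coset:
  assumes f: "cocycle2 Zsq f"
  shows "kapC (Cob Zsq #>\<^bsub>Z2grp Zsq\<^esub> f) = kap f"
proof -
  let ?C = "Cob Zsq #>\<^bsub>Z2grp Zsq\<^esub> f"
  have "f \<in> ?C" by (rule rcos_self_Z2[OF monoid_Zsq f])
  then have s: "(SOME g. g \<in> ?C) \<in> ?C" by (rule someI[where P="\<lambda>g. g \<in> ?C"])
  have c: "cocycle2 Zsq (SOME g. g \<in> ?C)" by (rule rcos_elem_cocycle[OF monoid_Zsq f s])
  have "cobd Zsq (\<lambda>p. (SOME g. g \<in> ?C) p - f p)" using mem_rcos_iff[OF monoid_Zsq c f] s by simp
  then have "kap (\<lambda>p. (SOME g. g \<in> ?C) p - f p) = 0" by (rule kap_cobd)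
  then show ?thesis unfolding kapC_def kap_def by simp
qed

definition scE :: "int \<Rightarrow> ((int^2^2) \<times> (int^2)) \<times> ((int^2^2) \<times> (int^2)) \<Rightarrow> int" where
  "scE k = restrict (\<lambda>p. k * EJ p) (carrier Jacobi \<times> carrier Jacobi)"

lemma scE_cocycle: "cocycle2 Jacobi (scE k)"
  unfolding scE_def
  by (rule cocycle2_restrict[OF monoid_J cocyc_scal]) (use EJ_cocycle in \<open>simp add: cocycle2_iff\<close>)

definition splitJ :: "((int^2) \<times> (int^2) \<Rightarrow> int) set \<Rightarrow> (((int^2^2) \<times> (int^2)) \<times> ((int^2^2) \<times> (int^2)) \<Rightarrow> int) set" where
  "splitJ C = Cob Jacobi #>\<^bsub>Z2grp Jacobi\<^esub> scE (kapC C)"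

lemma splitJ_hom: "splitJ \<in> hom (H2 Zsq) (H2 Jacobi)"
proof (rule homI)
  fix C assume "C \<in> carrier (H2 Zsq)"
  show "splitJ C \<in> carrier (H2 Jacobi)"
    unfolding splitJ_def carrier_H2 using scE_cocycle by blast
next
  fix C D assume "C \<in> carrier (H2 Zsq)" "D \<in> carrier (H2 Zsq)"
  then obtain f g where f: "cocycle2 Zsq f" "C = Cob Zsq #>\<^bsub>Z2grp Zsq\<^esub> f"
     and g: "cocycle2 Zsq g" "D = Cob Zsq #>\<^bsub>Z2grp Zsq\<^esub> g"
    unfolding carrier_H2 by auto
  have fg: "cocycle2 Zsq (restrict (\<lambda>p. f p + g p) (carrier Zsq \<times> carrier Zsq))"
    using cocycle2_restrict[OF monoid_Zsq cocyc_add] f g by (simp add: cocycle2_iff)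
  have k: "kap (restrict (\<lambda>p. f p + g p) (carrier Zsq \<times> carrier Zsq)) = kap f + kap g"
    unfolding kap_def by simp
  have e: "scE (kap f + kap g) = restrict (\<lambda>p. scE (kap f) p + scE (kap g) p) (carrier Jacobi \<times> carrier Jacobi)"
    unfolding scE_def by (rule ext) (simp add: algebra_simps)
  show "splitJ (C \<otimes>\<^bsub>H2 Zsq\<^esub> D) = splitJ C \<otimes>\<^bsub>H2 Jacobi\<^esub> splitJ D"
    unfolding f(2) g(2) mult_H2[OF monoid_Zsq f(1) g(1)] splitJ_def kapC_coset[OF f(1)]
      kapC_coset[OF g(1)] kapC_coset[OF fg] k mult_H2[OF monoid_J scE_cocycle scE_cocycle] e ..
qed

lemma splitJ_section:
  assumes "C \<in> carrier (H2 Zsq)"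
  shows "H2_map Zsq iJ (splitJ C) = C"
proof -
  obtain f where f: "cocycle2 Zsq f" "C = Cob Zsq #>\<^bsub>Z2grp Zsq\<^esub> f"
    using assms unfolding carrier_H2 by auto
  have fc: "cocyc Zsq f" using f(1) by (simp add: cocycle2_iff)
  have ps: "cocycle2 Zsq (pull2 Zsq iJ (scE (kap f)))" by (rule pull_cocycle2[OF monoid_Zsq homlike_i scE_cocycle])
  have "cobd Zsq (\<lambda>p. - (f p - kap f * (fst p $ 1 * snd p $ 2)))"
    by (rule cobd_neg[OF Z_split[OF fc]])
  then have "cobd Zsq (\<lambda>p. pull2 Zsq iJ (scE (kap f)) p - f p)"
    by (rule cobd_cong) (simp add: scE_def iJ_def EJ_def Bf_def)
  then have "Cob Zsq #>\<^bsub>Z2grp Zsq\<^esub> pull2 Zsq iJ (scE (kap f)) = Cob Zsq #>\<^bsub>Z2grp Zsq\<^esub> f"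
    using rcos_eq_iff[OF monoid_Zsq ps f(1)] by simp
  then show ?thesis
    unfolding f(2) splitJ_def kapC_coset[OF f(1)] H2_map_coset[OF monoid_Zsq monoid_J homlike_i scE_cocycle] .
qed

theorem theorem5:
  shows "H2_map Jacobi rhoJ \<in> hom (H2 SL2Z) (H2 Jacobi)
    \<and> H2_map Zsq iJ \<in> hom (H2 Jacobi) (H2 Zsq)
    \<and> inj_on (H2_map Jacobi rhoJ) (carrier (H2 SL2Z))
    \<and> H2_map Jacobi rhoJ ` carrier (H2 SL2Z) = kernel (H2 Jacobi) (H2 Zsq) (H2_map Zsq iJ)
    \<and> H2_map Zsq iJ ` carrier (H2 Jacobi) = carrier (H2 Zsq)
    \<and> (\<exists>s \<in> hom (H2 Zsq) (H2 Jacobi). \<forall>c \<in> carrier (H2 Zsq). H2_map Zsq iJ (s c) = c)"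
proof (intro conjI)
  show h1: "H2_map Jacobi rhoJ \<in> hom (H2 SL2Z) (H2 Jacobi)"
    by (rule H2_map_hom[OF monoid_J monoid_SL homlike_rho])
  show h2: "H2_map Zsq iJ \<in> hom (H2 Jacobi) (H2 Zsq)"
    by (rule H2_map_hom[OF monoid_Zsq monoid_J homlike_i])
  show "inj_on (H2_map Jacobi rhoJ) (carrier (H2 SL2Z))"
    by (rule inj_onI) (rule rho_inj)
  show "H2_map Jacobi rhoJ ` carrier (H2 SL2Z) = kernel (H2 Jacobi) (H2 Zsq) (H2_map Zsq iJ)"
    by (rule rho_image_kernel)
  show "H2_map Zsq iJ ` carrier (H2 Jacobi) = carrier (H2 Zsq)"
  proof
    show "H2_map Zsq iJ ` carrier (H2 Jacobi) \<subseteq> carrier (H2 Zsq)"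
      using h2 unfolding hom_def by auto
    show "carrier (H2 Zsq) \<subseteq> H2_map Zsq iJ ` carrier (H2 Jacobi)"
    proof
      fix c assume c: "c \<in> carrier (H2 Zsq)"
      have "splitJ c \<in> carrier (H2 Jacobi)" using splitJ_hom c unfolding hom_def by auto
      then show "c \<in> H2_map Zsq iJ ` carrier (H2 Jacobi)"
        using splitJ_section[OF c] by force
    qed
  qed
  show "\<exists>s \<in> hom (H2 Zsq) (H2 Jacobi). \<forall>c \<in> carrier (H2 Zsq). H2_map Zsq iJ (s c) = c"
    using splitJ_hom splitJ_section by blast
qed


end
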